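(* There exists a constant $c>0$ such that for all even positive integers $n,m$, every eigenvalue $\lambda$ of the $nm\times nm$ Laplacian matrix $$\mathbf{L}=\mathbf{I}_n\otimes\big(\mathbf{D}^{(2)}_m+\mathbf{T}_{\sin^2}^{-1}\mathbf{T}_{\cos\sin}\mathbf{D}_m\big)+\mathbf{D}^{(2)}_n\otimes \mathbf{T}_{\sin^2}^{-1}$$ satisfies $|\lambda|\le c\,(n^2m^2+m^3)$. That is, $|\lambda_{\max}(\mathbf{L})|=\mathcal{O}(n^2m^2+m^3)$.
   Context: Here $\otimes$ is the Kronecker product and $\mathbf{I}_n$ is the $n\times n$ identity. For an even integer $m$: - $\mathbf{D}_m=\mathrm{diag}\big(i\cdot(0,-m/2+1,-m/2+2,\ldots,m/2-1)\big)$ ($m\times m$, $i=\sqrt{-1}$). - $\mathbf{D}^{(2)}_m=\mathrm{diag}\big(-j^2\big)_{j=-m/2}^{m/2-1}$; $\mathbf{D}^{(2)}_n$ is defined in the same way with $n$ in place of $m$. - $\mathbf{P}$ is the $(m+1)\times m$ matrix with $\mathbf{P}_{1,1}=\mathbf{P}_{m+1,1}=1/2$, $\mathbf{P}_{j,j}=1$ for $2\le j\le m$, and all other entries zero. - $\mathbf{Q}$ is the $m\times(m+5)$ matrix with $\mathbf{Q}_{j,j+2}=1$ for $1\le j\le m$, $\mathbf{Q}_{1,m+3}=1$, and all other entries zero. - $\mathbf{M}_{\sin^2}$ is the $(m+5)\times(m+5)$ symmetric Toeplitz matrix with $1/2$ on the main diagonal, $-1/4$ in entries $(r,r\pm2)$,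 and zeros elsewhere. - $\mathbf{M}_{\cos\sin}$ is the $(m+5)\times(m+5)$ Toeplitz matrix with entries $(r,r+2)$ equal to $i/4$, entries $(r+2,r)$ equal to $-i/4$, and zeros elsewhere. - $\mathbf{M}(:,3{:}m{+}3)$ denotes the submatrix of columns $3$ through $m+3$. - $\mathbf{T}_{\sin^2}=\mathbf{Q}\,\mathbf{M}_{\sin^2}(:,3{:}m{+}3)\,\mathbf{P}$ and $\mathbf{T}_{\cos\sin}=\mathbf{Q}\,\mathbf{M}_{\cos\sin}(:,3{:}m{+}3)\,\mathbf{P}$ (both $m\times m$). The matrix $\mathbf{T}_{\sin^2}$ is invertible, so $\mathbf{L}$ is well defined. *)

theory Defs
  imports Complex_Main "Jordan_Normal_Form.Matrix" "Jordan_Normal_Form.Char_Poly"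
begin

text \<open>All matrices are complex JNF matrices, indexed from 0 (paper indices minus one).\<close>

definition kron :: "complex mat \<Rightarrow> complex mat \<Rightarrow> complex mat" where
  "kron A B = mat (dim_row A * dim_row B) (dim_col A * dim_col B)
     (\<lambda>(i,j). A $$ (i div dim_row B, j div dim_col B) * B $$ (i mod dim_row B, j mod dim_col B))"

definition Dmat :: "nat \<Rightarrow> complex mat" where
  "Dmat m = mat m m (\<lambda>(i,j). if i = j then (if i = 0 then 0 else \<i> * of_int (int i - int m div 2)) else 0)"

definition D2mat :: "nat \<Rightarrow> complex mat" where
  "D2mat m = mat m m (\<lambda>(i,j). if i = j then - ((of_int (int i - int m div 2)) ^ 2) else 0)"

definition Pmat :: "nat \<Rightarrow> complex mat" where
  "Pmat m = mat (m+1) m (\<lambda>(i,j).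
     if j = 0 \<and> (i = 0 \<or> i = m) then 1/2
     else if i = j \<and> 1 \<le> i \<and> i \<le> m - 1 then 1 else 0)"

definition Qmat :: "nat \<Rightarrow> complex mat" where
  "Qmat m = mat m (m+5) (\<lambda>(i,j). if (i < m \<and> j = i + 2) \<or> (i = 0 \<and> j = m + 2) then 1 else 0)"

definition Msin2 :: "nat \<Rightarrow> complex mat" where
  "Msin2 m = mat (m+5) (m+5) (\<lambda>(r,s). if r = s then 1/2 else if r = s + 2 \<or> s = r + 2 then -1/4 else 0)"

definition Mcossin :: "nat \<Rightarrow> complex mat" where
  "Mcossin m = mat (m+5) (m+5) (\<lambda>(r,s). if s = r + 2 then \<i>/4 else if r = s + 2 then -\<i>/4 else 0)"

text \<open>M(:,3:m+3): columns 3..m+3 (1-based), i.e. 0-based columns 2..m+2.\<close>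
definition colsub :: "nat \<Rightarrow> complex mat \<Rightarrow> complex mat" where
  "colsub m M = mat (dim_row M) (m+1) (\<lambda>(i,j). M $$ (i, j + 2))"

definition Tsin2 :: "nat \<Rightarrow> complex mat" where
  "Tsin2 m = Qmat m * colsub m (Msin2 m) * Pmat m"

definition Tcossin :: "nat \<Rightarrow> complex mat" where
  "Tcossin m = Qmat m * colsub m (Mcossin m) * Pmat m"

definition minv :: "complex mat \<Rightarrow> complex mat" where
  "minv A = (SOME B. B \<in> carrier_mat (dim_row A) (dim_row A) \<and> inverts_mat A B \<and> inverts_mat B A)"

definition Lmat :: "nat \<Rightarrow> nat \<Rightarrow> complex mat" where
  "Lmat n m = kron (1\<^sub>m n) (D2mat m + minv (Tsin2 m) * Tcossin m * Dmat m)
             + kron (D2mat n) (minv (Tsin2 m))"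

end

theory Submission
  imports Defs
begin


definition rb :: "complex mat \<Rightarrow> real \<Rightarrow> bool" where
  "rb A r \<longleftrightarrow> (\<forall>i<dim_row A. (\<Sum>j<dim_col A. cmod (A $$ (i,j))) \<le> r)"

lemma sum_div_mod: fixes a b :: nat shows "(\<Sum>j<a*b. f (j div b) (j mod b)) = (\<Sum>x<a. \<Sum>y<b. f x y)"
proof (induction a)
  case 0 then show ?case by simp
next
  case (Suc a)
  have eq: "{..<Suc a * b} = {..<a*b} \<union> {a*b..<a*b+b}" by auto
  have "(\<Sum>j<Suc a*b. f (j div b) (j mod b)) = (\<Sum>j\<in>{..<a*b} \<union> {a*b..<a*b+b}. f (j div b) (j mod b))"
    by (simp only: eq)
  also have "\<dots> = (\<Sum>j<a*b. f (j div b) (j mod b)) + (\<Sum>j\<in>{a*b..<a*b+b}. f (j div b) (j mod b))"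
    by (subst sum.union_disjoint) auto
  also have "(\<Sum>j\<in>{a*b..<a*b+b}. f (j div b) (j mod b)) = (\<Sum>y<b. f a y)"
  proof -
    have "(\<Sum>j\<in>{a*b..<a*b+b}. f (j div b) (j mod b)) = (\<Sum>y\<in>{0..<b}. f ((y + a*b) div b) ((y+a*b) mod b))"
      using sum.shift_bounds_nat_ivl[of "\<lambda>j. f (j div b) (j mod b)" 0 "a*b" b] by (simp add: add.commute)
    also have "\<dots> = (\<Sum>y<b. f a y)"
      by (intro sum.cong) auto
    finally show ?thesis .
  qed
  finally show ?case using Suc by simp
qed

lemma rb_add: assumes "rb A r" "rb B s" "dim_row A = dim_row B" "dim_col A = dim_col B"
  shows "rb (A + B) (r + s)"
  unfolding rb_def
proof (intro allI impI)
  fix i assume i: "i < dim_row (A+B)"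
  have "(\<Sum>j<dim_col (A+B). cmod ((A+B) $$ (i,j))) \<le> (\<Sum>j<dim_col B. cmod (A $$ (i,j)) + cmod (B $$ (i,j)))"
    using i unfolding index_add_mat(3) by (intro sum_mono) (auto intro: norm_triangle_ineq)
  also have "\<dots> \<le> r + s" using assms i unfolding rb_def by (simp add: sum.distrib add_mono)
  finally show "(\<Sum>j<dim_col (A+B). cmod ((A+B) $$ (i,j))) \<le> r + s" .
qed

lemma rb_mult: assumes "rb A r" "rb B s" "dim_col A = dim_row B" "s \<ge> 0"
  shows "rb (A * B) (r * s)"
  unfolding rb_def
proof (intro allI impI)
  fix i assume i: "i < dim_row (A*B)"
  have "(\<Sum>j<dim_col (A*B). cmod ((A*B) $$ (i,j))) \<le> (\<Sum>j<dim_col B. \<Sum>k<dim_row B. cmod (A $$ (i,k)) * cmod (B $$ (k,j)))"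
  unfolding index_mult_mat(3)
  proof (intro sum_mono)
    fix j assume j: "j \<in> {..<dim_col B}"
    have "(A*B) $$ (i,j) = (\<Sum>k<dim_row B. A $$ (i,k) * B $$ (k,j))"
      using i j assms(3) by (auto simp: scalar_prod_def lessThan_atLeast0 intro!: sum.cong)
    also have "cmod \<dots> \<le> (\<Sum>k<dim_row B. cmod (A $$ (i,k)) * cmod (B $$ (k,j)))"
      by (rule order_trans[OF norm_sum]) (simp add: norm_mult)
    finally show "cmod ((A*B) $$ (i,j)) \<le> \<dots>" .
  qed
  also have "\<dots> = (\<Sum>k<dim_row B. cmod (A $$ (i,k)) * (\<Sum>j<dim_col B. cmod (B $$ (k,j))))"
    by (subst sum.swap) (simp add: sum_distrib_left)
  also have "\<dots> \<le> (\<Sum>k<dim_row B. cmod (A $$ (i,k)) * s)"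
    using assms(2) unfolding rb_def by (intro sum_mono mult_left_mono) auto
  also have "\<dots> \<le> r * s"
    using assms i unfolding rb_def by (simp add: sum_distrib_right[symmetric] mult_right_mono)
  finally show "(\<Sum>j<dim_col (A*B). cmod ((A*B) $$ (i,j))) \<le> r * s" .
qed

lemma rb_kron: assumes "rb A r" "rb B s" "s \<ge> 0"
  shows "rb (kron A B) (r * s)"
  unfolding rb_def
proof (intro allI impI)
  fix i assume i: "i < dim_row (kron A B)"
  hence i': "i < dim_row A * dim_row B" by (simp add: kron_def)
  hence pos: "dim_row B > 0" by (cases "dim_row B") auto
  have p: "i div dim_row B < dim_row A" using i' pos by (simp add: less_mult_imp_div_less)
  have q: "i mod dim_row B < dim_row B" using pos by simp
  have r0: "0 \<le> r" using assms(1) p unfolding rb_def by (meson order_trans sum_nonneg norm_ge_zero)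
  have "(\<Sum>j<dim_col (kron A B). cmod (kron A B $$ (i,j)))
     = (\<Sum>j<dim_col A * dim_col B. cmod (A $$ (i div dim_row B, j div dim_col B)) * cmod (B $$ (i mod dim_row B, j mod dim_col B)))"
    using i' by (auto simp: kron_def norm_mult intro!: sum.cong)
  also have "\<dots> = (\<Sum>x<dim_col A. \<Sum>y<dim_col B. cmod (A $$ (i div dim_row B, x)) * cmod (B $$ (i mod dim_row B, y)))"
    by (rule sum_div_mod)
  also have "\<dots> = (\<Sum>x<dim_col A. cmod (A $$ (i div dim_row B, x))) * (\<Sum>y<dim_col B. cmod (B $$ (i mod dim_row B, y)))"
    by (rule sum_product[symmetric])
  also have "\<dots> \<le> r * s"
    using assms p q r0 unfolding rb_def by (intro mult_mono) (auto intro: sum_nonneg)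
  finally show "(\<Sum>j<dim_col (kron A B). cmod (kron A B $$ (i,j))) \<le> r * s" .
qed

lemma rb_eig: assumes "eigenvalue A lam" "dim_col A = dim_row A" "rb A r"
  shows "cmod lam \<le> r"
proof -
  obtain v where v: "v \<in> carrier_vec (dim_row A)" "v \<noteq> 0\<^sub>v (dim_row A)" "A *\<^sub>v v = lam \<cdot>\<^sub>v v"
    using assms(1) unfolding eigenvalue_def eigenvector_def by blast
  define n where "n = dim_row A"
  have "n > 0" using v unfolding n_def by (cases "dim_row A") auto
  define M where "M = Max ((\<lambda>j. cmod (v$j)) ` {..<n})"
  have "M \<in> (\<lambda>j. cmod (v$j)) ` {..<n}" unfolding M_def using \<open>n > 0\<close> by (intro Max_in) auto
  then obtain i where i0: "i < n" "cmod (v$i) = M" by auto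
  have i: "i < n" "\<And>j. j < n \<Longrightarrow> cmod (v $ j) \<le> cmod (v $ i)"
    using i0 unfolding M_def by (auto intro: Max_ge)
  have "\<exists>j<n. v $ j \<noteq> 0"
  proof (rule ccontr)
    assume "\<not> (\<exists>j<n. v $ j \<noteq> 0)"
    hence "v = 0\<^sub>v n" using v(1) unfolding n_def by (intro eq_vecI) auto
    thus False using v(2) unfolding n_def by simp
  qed
  then obtain j where "j < n" "v $ j \<noteq> 0" by blast
  hence vi: "cmod (v $ i) > 0" using i(2)[of j] zero_less_norm_iff[of "v $ j"] by linarith
  have eqv: "lam * v $ i = (\<Sum>j<n. A $$ (i,j) * v $ j)"
  proof -
    have e1: "(A *\<^sub>v v) $ i = lam * v $ i" using v i unfolding n_def by simp
    have e2: "(A *\<^sub>v v) $ i = (\<Sum>j<n. A $$ (i,j) * v $ j)"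
      using v(1) i assms(2) unfolding n_def by (auto simp: scalar_prod_def lessThan_atLeast0 intro!: sum.cong)
    show ?thesis using trans[OF sym[OF e1] e2] .
  qed
  have "cmod lam * cmod (v $ i) = cmod (\<Sum>j<n. A $$ (i,j) * v $ j)"
    by (rule trans[OF norm_mult[symmetric] arg_cong[OF eqv, of cmod]])
  also have "\<dots> \<le> (\<Sum>j<n. cmod (A $$ (i,j) * v $ j))" by (rule norm_sum)
  also have "\<dots> = (\<Sum>j<n. cmod (A $$ (i,j)) * cmod (v $ j))" by (simp add: norm_mult)
  also have "\<dots> \<le> (\<Sum>j<n. cmod (A $$ (i,j)) * cmod (v $ i))"
    using i by (intro sum_mono mult_left_mono) auto
  also have "\<dots> \<le> r * cmod (v $ i)"
    using assms(3) assms(2) i unfolding rb_def n_def by (simp add: sum_distrib_right[symmetric] mult_right_mono)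
  finally show ?thesis using vi by simp
qed




definition Godd :: "nat \<Rightarrow> nat \<Rightarrow> nat \<Rightarrow> real" where
  "Godd k a b = 4 * real (min a b + 1) * real (k - max a b) / real (k + 1)"

definition Heven :: "nat \<Rightarrow> nat \<Rightarrow> nat \<Rightarrow> real" where
  "Heven k a b = 2 + 4 * real (min a b) * real (k - max a b) / real k"

lemma godd_rec:
  assumes "a < k" "b < k"
  shows "Godd k a b / 2 - (if 1 \<le> a then Godd k (a-1) b else 0) / 4 - Godd k (a+1) b / 4 = (if a = b then 1 else 0)"
proof -
  define d where "d = real k + 1"
  have k: "d \<noteq> 0" using of_nat_0_le_iff[of k] unfolding d_def by linarith
  have G: "Godd k x b = 4 * (real (min x b) + 1) * (d - 1 - real (max x b)) / d" if "x \<le> k" for x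
    using that assms by (simp add: Godd_def of_nat_diff algebra_simps d_def)
  consider "a < b" | "a = b" | "b < a" by linarith
  then show ?thesis
  proof cases
    case 1
    have e1: "min a b = a" "max a b = b" "min (a+1) b = a+1" "max (a+1) b = b" using 1 by auto
    have e2: "1 \<le> a \<Longrightarrow> min (a-1) b = a - 1 \<and> max (a-1) b = b" using 1 by auto
    show ?thesis
    proof (cases "a = 0")
      case True thus ?thesis using 1 assms k by (simp add: G e1 field_simps)
    next
      case False
      hence "real (a - 1) = real a - 1" by (simp add: of_nat_diff)
      thus ?thesis using 1 assms k False e2 by (simp add: G e1 field_simps)
    qed
  next
    case 2
    have e1: "min a b = a" "max a b = a" "min (a+1) b = a" "max (a+1) b = a+1" using 2 by auto
    have e2: "1 \<le> a \<Longrightarrow> min (a-1) b = a - 1 \<and> max (a-1) b = a" using 2 by auto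
    show ?thesis
    proof (cases "a = 0")
      case True
      have g0: "4 + d * Godd k 0 0 = d * 4" "8 + d * Godd k 1 0 = d * 4" using True 2 assms k G[of 0] G[of 1] by (simp_all add: field_simps)
      have "d * (4 + Godd k 1 0) = d * (2 * Godd k 0 0)" using g0 by (simp add: algebra_simps)
      hence "4 + Godd k 1 0 = 2 * Godd k 0 0" using k by simp
      thus ?thesis using True 2 by simp
    next
      case False
      hence "real (a - 1) = real a - 1" by (simp add: of_nat_diff)
      thus ?thesis using 2 assms k False e2 by (simp add: G e1 field_simps)
    qed
  next
    case 3
    have e1: "min a b = b" "max a b = a" "min (a+1) b = b" "max (a+1) b = a+1" "min (a-1) b = b" "max (a-1) b = a - 1" using 3 by auto
    have "real (a - 1) = real a - 1" using 3 by (simp add: of_nat_diff)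
    thus ?thesis using 3 assms k by (simp add: G e1 field_simps)
  qed
qed

lemma heven_rec:
  assumes "1 \<le> a" "a < k" "b < k"
  shows "Heven k a b / 2 - Heven k (a-1) b / 4 - Heven k (a+1) b / 4 = (if a = b then 1 else 0)"
proof -
  have k: "real k \<noteq> 0" using assms by simp
  have G: "Heven k x b = 2 + 4 * real (min x b) * (real k - real (max x b)) / real k" if "x \<le> k" for x
    using that assms by (simp add: Heven_def of_nat_diff)
  have am: "real (a - 1) = real a - 1" using assms by (simp add: of_nat_diff)
  consider "a < b" | "a = b" | "b < a" by linarith
  then show ?thesis
  proof cases
    case 1
    have e1: "min a b = a" "max a b = b" "min (a+1) b = a+1" "max (a+1) b = b" "min (a-1) b = a - 1" "max (a-1) b = b" using 1 by auto
    show ?thesis using 1 assms k am by (simp add: G e1 field_simps)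
  next
    case 2
    have e1: "min a b = a" "max a b = a" "min (a+1) b = a" "max (a+1) b = a+1" "min (a-1) b = a - 1" "max (a-1) b = a" using 2 by auto
    show ?thesis using 2 assms k am by (simp add: G e1 field_simps)
  next
    case 3
    have e1: "min a b = b" "max a b = a" "min (a+1) b = b" "max (a+1) b = a+1" "min (a-1) b = b" "max (a-1) b = a - 1" using 3 by auto
    show ?thesis using 3 assms k am by (simp add: G e1 field_simps)
  qed
qed

lemma heven0:
  assumes "b < k"
  shows "2 - Heven k 1 b / 4 - Heven k (k-1) b / 4 = (if b = 0 then 1 else 0)"
proof -
  have k: "real k \<noteq> 0" using assms by simp
  show ?thesis
  proof (cases "b = 0")
    case True then show ?thesis by (simp add: Heven_def)
  next
    case False
    have e1: "min 1 b = 1" "max 1 b = b" "min (k-1) b = b" "max (k-1) b = k - 1" using False assms by auto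
    have "real (k - b) = real k - real b" "real (k - (k - 1)) = 1" using assms by (auto simp: of_nat_diff)
    then show ?thesis using False assms k by (simp add: Heven_def e1 field_simps)
  qed
qed




lemma sum_delta_cond: "finite S \<Longrightarrow> (\<Sum>j\<in>S. if j = c \<and> Q then g j else 0) = (if c \<in> S \<and> Q then g c else 0)"
  by (cases Q) auto

lemma Pmat_carrier: "Pmat m \<in> carrier_mat (m+1) m" by (simp add: Pmat_def)
lemma Qmat_carrier: "Qmat m \<in> carrier_mat m (m+5)" by (simp add: Qmat_def)
lemma Csin_carrier: "colsub m (Msin2 m) \<in> carrier_mat (m+5) (m+1)" by (simp add: colsub_def Msin2_def)
lemma Ccs_carrier: "colsub m (Mcossin m) \<in> carrier_mat (m+5) (m+1)" by (simp add: colsub_def Mcossin_def)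
lemma Tsin2_carrier: "Tsin2 m \<in> carrier_mat m m"
  unfolding Tsin2_def by (rule mult_carrier_mat[OF mult_carrier_mat[OF Qmat_carrier Csin_carrier] Pmat_carrier])
lemma Tcossin_carrier: "Tcossin m \<in> carrier_mat m m"
  unfolding Tcossin_def by (rule mult_carrier_mat[OF mult_carrier_mat[OF Qmat_carrier Ccs_carrier] Pmat_carrier])

lemma Pv:
  assumes x: "x \<in> carrier_vec m" and m: "0 < m" and j: "j < m + 1"
  shows "(Pmat m *\<^sub>v x) $ j = (if j = 0 \<or> j = m then x$0/2 else x$j)"
proof -
  have "(Pmat m *\<^sub>v x) $ j = (\<Sum>k\<in>{0..<m}. Pmat m $$ (j,k) * x $ k)"
    using x j by (simp add: scalar_prod_def Pmat_def)
  also have "\<dots> = (\<Sum>k\<in>{0..<m}. if k = (if j = 0 \<or> j = m then 0 else j) \<and> True then (if j = 0 \<or> j = m then x$0/2 else x$j) else 0)"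
    using j by (intro sum.cong) (auto simp: Pmat_def)
  also have "\<dots> = (if j = 0 \<or> j = m then x$0/2 else x$j)"
    using m j by (subst sum_delta_cond) auto
  finally show ?thesis .
qed

lemma Cv:
  assumes y: "y \<in> carrier_vec (m+1)" and r: "r < m + 5"
  shows "(colsub m (Msin2 m) *\<^sub>v y) $ r = (if r - 2 \<le> m \<and> 2 \<le> r then y$(r-2)/2 else 0)
      - (if r - 4 \<le> m \<and> 4 \<le> r then y$(r-4)/4 else 0) - (if r \<le> m then y$r/4 else 0)"
proof -
  have "(colsub m (Msin2 m) *\<^sub>v y) $ r = (\<Sum>j\<in>{0..<m+1}. Msin2 m $$ (r, j+2) * y $ j)"
    using y r by (simp add: scalar_prod_def colsub_def Msin2_def)
  also have "\<dots> = (\<Sum>j\<in>{0..<m+1}. (if j = r - 2 \<and> 2 \<le> r then y$j/2 else 0)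
      + (if j = r - 4 \<and> 4 \<le> r then - y$j/4 else 0) + (if j = r \<and> True then - y$j/4 else 0))"
    using r by (intro sum.cong) (auto simp: Msin2_def)
  also have "\<dots> = (if r - 2 \<le> m \<and> 2 \<le> r then y$(r-2)/2 else 0)
      - (if r - 4 \<le> m \<and> 4 \<le> r then y$(r-4)/4 else 0) - (if r \<le> m then y$r/4 else 0)"
    by (simp only: sum.distrib sum_delta_cond finite_atLeastLessThan) auto
  finally show ?thesis .
qed

lemma Qv:
  assumes w: "w \<in> carrier_vec (m+5)" and i: "i < m" 
  shows "(Qmat m *\<^sub>v w) $ i = w$(i+2) + (if i = 0 then w$(m+2) else 0)"
proof -
  have "(Qmat m *\<^sub>v w) $ i = (\<Sum>r\<in>{0..<m+5}. Qmat m $$ (i, r) * w $ r)"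
    using w i by (simp add: scalar_prod_def Qmat_def)
  also have "\<dots> = (\<Sum>r\<in>{0..<m+5}. (if r = i + 2 \<and> True then w$r else 0) + (if r = m + 2 \<and> i = 0 then w$r else 0))"
    using i by (intro sum.cong) (auto simp: Qmat_def)
  also have "\<dots> = w$(i+2) + (if i = 0 then w$(m+2) else 0)"
    using i by (simp only: sum.distrib sum_delta_cond finite_atLeastLessThan) auto
  finally show ?thesis .
qed

definition xt :: "nat \<Rightarrow> complex vec \<Rightarrow> nat \<Rightarrow> complex" where
  "xt m x j = (if j = 0 \<or> j = m then x$0/2 else if j < m then x$j else 0)"

lemma Tv:
  assumes x: "x \<in> carrier_vec m" and m: "2 \<le> m" and i: "i < m"
  shows "(Tsin2 m *\<^sub>v x) $ i = xt m x i / 2 - (if 2 \<le> i then xt m x (i-2) else 0) / 4 - xt m x (i+2) / 4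
     + (if i = 0 then xt m x m / 2 - xt m x (m-2) / 4 else 0)"
proof -
  define y where "y = Pmat m *\<^sub>v x"
  define w where "w = colsub m (Msin2 m) *\<^sub>v y"
  have y: "y \<in> carrier_vec (m+1)" unfolding y_def by (rule mult_mat_vec_carrier[OF Pmat_carrier x])
  have w: "w \<in> carrier_vec (m+5)" unfolding w_def by (rule mult_mat_vec_carrier[OF Csin_carrier y])
  have "Tsin2 m *\<^sub>v x = (Qmat m * colsub m (Msin2 m)) *\<^sub>v (Pmat m *\<^sub>v x)"
    unfolding Tsin2_def by (rule assoc_mult_mat_vec[OF mult_carrier_mat[OF Qmat_carrier Csin_carrier] Pmat_carrier x])
  also have "\<dots> = Qmat m *\<^sub>v (colsub m (Msin2 m) *\<^sub>v (Pmat m *\<^sub>v x))"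
    by (rule assoc_mult_mat_vec[OF Qmat_carrier Csin_carrier mult_mat_vec_carrier[OF Pmat_carrier x]])
  finally have T: "Tsin2 m *\<^sub>v x = Qmat m *\<^sub>v w" unfolding w_def y_def .
  have yj: "j \<le> m \<Longrightarrow> y $ j = xt m x j" for j
    unfolding y_def xt_def using Pv[OF x] m by auto
  have "(Tsin2 m *\<^sub>v x) $ i = w$(i+2) + (if i = 0 then w$(m+2) else 0)"
    unfolding T using Qv[OF w i] .
  also have "w$(i+2) = xt m x i / 2 - (if 2 \<le> i then xt m x (i-2) else 0) / 4 - xt m x (i+2) / 4"
    unfolding w_def using Cv[OF y, of "i+2"] i yj by (auto simp: xt_def)
  also have "(if i = 0 then w$(m+2) else 0) = (if i = 0 then xt m x m / 2 - xt m x (m-2) / 4 else 0)"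
    unfolding w_def using Cv[OF y, of "m+2"] m yj by (auto simp: xt_def)
  finally show ?thesis by simp
qed




definition Xr :: "nat \<Rightarrow> nat \<Rightarrow> nat \<Rightarrow> real" where
  "Xr m i l = (let k = m div 2; a = i div 2; b = l div 2 in
     if odd i \<and> odd l then Godd k a b
     else if even i \<and> even l then (if a = 0 then 4 else Heven k a b) else 0)"

definition xr :: "nat \<Rightarrow> nat \<Rightarrow> nat \<Rightarrow> real" where
  "xr m l j = (if j = 0 \<or> j = m then Xr m 0 l / 2 else if j < m then Xr m j l else 0)"

lemma Xr_oo: "Xr (2*k) (2*a+1) (2*b+1) = Godd k a b" by (simp add: Xr_def)
lemma Xr_ee: "Xr (2*k) (2*a) (2*b) = (if a = 0 then 4 else Heven k a b)" by (simp add: Xr_def)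
lemma Xr_oe: "Xr (2*k) (2*a+1) (2*b) = 0" by (simp add: Xr_def)
lemma Xr_eo: "Xr (2*k) (2*a) (2*b+1) = 0" by (simp add: Xr_def)

lemma Godd_top: "b < k \<Longrightarrow> Godd k k b = 0" by (simp add: Godd_def)
lemma Heven_top: "b < k \<Longrightarrow> Heven k k b = 2" by (simp add: Heven_def)
lemma Heven_bot: "Heven k 0 b = 2" by (simp add: Heven_def)

lemma R:
  assumes m: "m = 2*k" "1 \<le> k" and i: "i < m" and l: "l < m"
  shows "xr m l i / 2 - (if 2 \<le> i then xr m l (i-2) else 0) / 4 - xr m l (i+2) / 4
     + (if i = 0 then xr m l m / 2 - xr m l (m-2) / 4 else 0) = (if i = l then 1 else 0)"
proof -
  define a where "a = i div 2"
  define b where "b = l div 2"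
  have a: "i = 2*a \<or> i = 2*a+1" unfolding a_def by presburger
  have b: "l = 2*b \<or> l = 2*b+1" unfolding b_def by presburger
  have ak: "a < k" using a i m by auto
  have bk: "b < k" using b l m by auto
  consider "i = 2*a+1" "l = 2*b+1" | "i = 2*a" "l = 2*b" | "i = 2*a+1" "l = 2*b" | "i = 2*a" "l = 2*b+1"
    using a b by blast
  then show ?thesis
  proof cases
    case 1
    have x0: "xr m l i = Godd k a b" using 1 m ak Xr_oo[of k a b] by (auto simp: xr_def; presburger)
    have x1: "(if 2 \<le> i then xr m l (i-2) else 0) = (if 1 \<le> a then Godd k (a-1) b else 0)"
    proof (cases "1 \<le> a")
      case True
      have "i - 2 = 2*(a-1)+1" using True 1 by auto
      then show ?thesis using True 1 m ak Xr_oo[of k "a-1" b] by (auto simp: xr_def; presburger)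
    qed (use 1 in auto)
    have x2: "xr m l (i+2) = Godd k (a+1) b"
    proof (cases "a + 1 < k")
      case True
      have "i + 2 = 2*(a+1)+1" using 1 by auto
      then show ?thesis using True 1 m Xr_oo[of k "a+1" b] by (auto simp: xr_def; presburger)
    next
      case False
      hence "a + 1 = k" using ak by auto
      then show ?thesis using 1 m bk by (auto simp: xr_def Godd_top; presburger)
    qed
    have "i \<noteq> 0" using 1 by auto
    moreover have "(i = l) = (a = b)" using 1 by auto
    ultimately show ?thesis using x0 x1 x2 godd_rec[OF ak bk] by simp
  next
    case 2
    have X0: "Xr m 0 l = 4" using 2 m Xr_ee[of k 0 b] by simp
    show ?thesis
    proof (cases "a = 0")
      case True
      have x0: "xr m l 0 = 2" "xr m l m = 2" using X0 by (auto simp: xr_def)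
      have x2: "xr m l 2 = Heven k 1 b"
      proof (cases "k = 1")
        case True thus ?thesis using bk m X0 by (auto simp: xr_def Heven_def)
      next
        case False thus ?thesis using m Xr_ee[of k 1 b] 2 by (auto simp: xr_def)
      qed
      have x3: "xr m l (m-2) = Heven k (k-1) b"
      proof (cases "k = 1")
        case True thus ?thesis using bk m X0 by (auto simp: xr_def Heven_def)
      next
        case False 
        have "m - 2 = 2*(k-1)" using m by auto
        thus ?thesis using m Xr_ee[of k "k-1" b] 2 False by (auto simp: xr_def)
      qed
      have x2': "xr m l (Suc (Suc 0)) = Heven k 1 b" using x2 by (simp add: numeral_2_eq_2)
      have "(i = l) = (b = 0)" using 2 True by auto
      thus ?thesis using True 2 x0 x2 x2' x3 heven0[OF bk] by simp
    next
      case False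
      have x0: "xr m l i = Heven k a b" using 2 m ak False Xr_ee[of k a b] by (auto simp: xr_def)
      have x1: "xr m l (i-2) = Heven k (a-1) b"
      proof (cases "a = 1")
        case True thus ?thesis using 2 X0 by (simp add: xr_def Heven_bot)
      next
        case F: False
        have "i - 2 = 2*(a-1)" using 2 by auto
        thus ?thesis using 2 m ak False F Xr_ee[of k "a-1" b] by (auto simp: xr_def)
      qed
      have x2: "xr m l (i+2) = Heven k (a+1) b"
      proof (cases "a + 1 = k")
        case True thus ?thesis using 2 m X0 bk by (auto simp: xr_def Heven_top)
      next
        case F: False
        have "i + 2 = 2*(a+1)" using 2 by auto
        thus ?thesis using 2 m ak F Xr_ee[of k "a+1" b] by (auto simp: xr_def)
      qed
      have "(i = l) = (a = b)" using 2 by auto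
      moreover have "i \<noteq> 0" "2 \<le> i" using 2 False by auto
      ultimately show ?thesis using x0 x1 x2 heven_rec[OF _ ak bk] False by simp
    qed
  next
    case 3
    have z: "xr m l j = 0" if "odd j" for j
    proof -
      obtain c where "j = 2*c+1" using \<open>odd j\<close> oddE by blast
      thus ?thesis using 3 m Xr_oe[of k c b] by (auto simp: xr_def; presburger)
    qed
    have "odd i" "odd (i-2) \<or> i < 2" "odd (i+2)" "i \<noteq> 0" "i \<noteq> l" using 3 by auto presburger+
    thus ?thesis using z by auto
  next
    case 4
    have X0: "Xr m 0 l = 0" using 4 m Xr_eo[of k 0 b] by simp
    have z: "xr m l j = 0" if "even j" for j
    proof -
      obtain c where "j = 2*c" using \<open>even j\<close> evenE by blast
      thus ?thesis using 4 m X0 Xr_eo[of k c b] by (auto simp: xr_def)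
    qed
    have "even i" "even (i-2)" "even (i+2)" "even m" "even (m-2)" using 4 m by auto
    moreover have "i \<noteq> l" using 4 by presburger
    ultimately show ?thesis using z by auto
  qed
qed




definition Xm :: "nat \<Rightarrow> complex mat" where
  "Xm m = mat m m (\<lambda>(i,l). complex_of_real (Xr m i l))"

lemma Xm_carrier: "Xm m \<in> carrier_mat m m" by (simp add: Xm_def)

lemma TX: assumes "even m" "0 < m" shows "Tsin2 m * Xm m = 1\<^sub>m m"
proof (rule eq_matI)
  obtain k where m: "m = 2*k" using assms(1) by blast
  have k: "1 \<le> k" using m assms(2) by simp
  have m2: "2 \<le> m" using m k by simp
  fix i l assume i: "i < dim_row (1\<^sub>m m)" and l: "l < dim_col (1\<^sub>m m)"
  hence i: "i < m" and l: "l < m" by auto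
  define x where "x = col (Xm m) l"
  have x: "x \<in> carrier_vec m" unfolding x_def Xm_def carrier_vec_def by simp
  have xt: "xt m x j = complex_of_real (xr m l j)" for j
    unfolding xt_def xr_def x_def Xm_def using l assms(2) by auto
  have "(Tsin2 m * Xm m) $$ (i,l) = (Tsin2 m *\<^sub>v x) $ i"
    unfolding x_def using i l Tsin2_carrier[of m] Xm_carrier[of m] by simp
  also have "\<dots> = complex_of_real (xr m l i / 2 - (if 2 \<le> i then xr m l (i-2) else 0) / 4 - xr m l (i+2) / 4
     + (if i = 0 then xr m l m / 2 - xr m l (m-2) / 4 else 0))"
    unfolding Tv[OF x m2 i] xt by simp
  also have "\<dots> = (if i = l then 1 else 0)" unfolding R[OF m k i l] by simp
  finally show "(Tsin2 m * Xm m) $$ (i,l) = 1\<^sub>m m $$ (i,l)" using i l by simp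
qed (use Tsin2_carrier[of m] Xm_carrier[of m] in auto)

lemma minv_T: assumes "even m" "0 < m" shows "minv (Tsin2 m) = Xm m"
proof -
  have TX: "Tsin2 m * Xm m = 1\<^sub>m m" using TX[OF assms] .
  have XT: "Xm m * Tsin2 m = 1\<^sub>m m"
    by (rule mat_mult_left_right_inverse[OF Tsin2_carrier Xm_carrier TX])
  let ?P = "\<lambda>B. B \<in> carrier_mat (dim_row (Tsin2 m)) (dim_row (Tsin2 m)) \<and> inverts_mat (Tsin2 m) B \<and> inverts_mat B (Tsin2 m)"
  have "?P (Xm m)" using TX XT Tsin2_carrier[of m] Xm_carrier[of m] by (simp add: inverts_mat_def)
  hence PB: "?P (minv (Tsin2 m))" unfolding minv_def by (rule someI)
  define B where "B = minv (Tsin2 m)"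
  have B: "B \<in> carrier_mat m m" "B * Tsin2 m = 1\<^sub>m m" using PB Tsin2_carrier[of m] unfolding B_def inverts_mat_def by auto
  have "B = B * (Tsin2 m * Xm m)" using B by (simp add: TX)
  also have "\<dots> = (B * Tsin2 m) * Xm m" using assoc_mult_mat[OF B(1) Tsin2_carrier[of m] Xm_carrier[of m]] by simp
  also have "\<dots> = Xm m" using B Xm_carrier[of m] by simp
  finally show ?thesis unfolding B_def .
qed




lemma kron_dims[simp]: "dim_row (kron A B) = dim_row A * dim_row B" "dim_col (kron A B) = dim_col A * dim_col B"
  by (simp_all add: kron_def)

lemma rb_delta:
  assumes "\<And>i j. i < dim_row A \<Longrightarrow> j < dim_col A \<Longrightarrow> cmod (A $$ (i,j)) \<le> (if j = f i then c else 0) + (if j = g i then c else 0)"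
    and "c \<ge> 0"
  shows "rb A (2*c)"
  unfolding rb_def
proof (intro allI impI)
  fix i assume i: "i < dim_row A"
  have "(\<Sum>j<dim_col A. cmod (A $$ (i,j))) \<le> (\<Sum>j<dim_col A. (if j = f i then c else 0) + (if j = g i then c else 0))"
    using i assms(1) by (intro sum_mono) auto
  also have "\<dots> = (if f i < dim_col A then c else 0) + (if g i < dim_col A then c else 0)"
    by (simp add: sum.distrib)
  also have "\<dots> \<le> 2 * c" using assms(2) by auto
  finally show "(\<Sum>j<dim_col A. cmod (A $$ (i,j))) \<le> 2 * c" .
qed

lemma rb_const:
  assumes "\<And>i j. i < dim_row A \<Longrightarrow> j < dim_col A \<Longrightarrow> cmod (A $$ (i,j)) \<le> c"
  shows "rb A (real (dim_col A) * c)"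
  unfolding rb_def
proof (intro allI impI)
  fix i assume i: "i < dim_row A"
  have "(\<Sum>j<dim_col A. cmod (A $$ (i,j))) \<le> (\<Sum>j<dim_col A. c)"
    using i assms(1) by (intro sum_mono) auto
  thus "(\<Sum>j<dim_col A. cmod (A $$ (i,j))) \<le> real (dim_col A) * c" by simp
qed

lemma Godd_bd: "0 \<le> Godd k a b \<and> Godd k a b \<le> 4 * real k"
proof -
  have "real (min a b + 1) * real (k - max a b) \<le> real k * real (k+1)"
  proof (cases "max a b < k")
    case True
    then show ?thesis by (intro mult_mono) auto
  next
    case False hence "k - max a b = 0" by (simp add: not_less max_def split: if_splits)
    thus ?thesis by simp
  qed
  hence "4 * (real (min a b + 1) * real (k - max a b)) / real (k+1) \<le> 4 * (real k * real (k+1)) / real (k+1)"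
    by (intro divide_right_mono) auto
  also have "\<dots> = 4 * real k" by simp
  finally show ?thesis unfolding Godd_def by (simp add: mult.assoc algebra_simps)
qed

lemma Heven_bd: "0 \<le> Heven k a b \<and> Heven k a b \<le> 2 + 4 * real k"
proof -
  have "real (min a b) * real (k - max a b) \<le> real k * real k"
  proof (cases "max a b < k")
    case True
    then show ?thesis by (intro mult_mono) auto
  next
    case False hence "k - max a b = 0" by (simp add: not_less max_def split: if_splits)
    thus ?thesis by simp
  qed
  hence "4 * (real (min a b) * real (k - max a b)) / real k \<le> 4 * (real k * real k) / real k"
    by (intro divide_right_mono) auto
  also have "\<dots> \<le> 4 * real k" by simp
  finally show ?thesis unfolding Heven_def by (simp add: mult.assoc)
qed

lemma Xr_bd: "0 \<le> Xr m i l \<and> Xr m i l \<le> 4 + 2 * real m"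
proof -
  have "4 * real (m div 2) \<le> 2 * real m" by linarith
  thus ?thesis using Godd_bd[of "m div 2" "i div 2" "l div 2"] Heven_bd[of "m div 2" "i div 2" "l div 2"]
    unfolding Xr_def Let_def by auto
qed

lemma rb_X: assumes "0 < m" shows "rb (Xm m) (real m * (6 * real m))"
proof -
  have "rb (Xm m) (real (dim_col (Xm m)) * (6 * real m))"
  proof (rule rb_const)
    fix i j assume "i < dim_row (Xm m)" "j < dim_col (Xm m)"
    hence "cmod (Xm m $$ (i,j)) = \<bar>Xr m i j\<bar>" by (simp add: Xm_def)
    also have "\<dots> \<le> 6 * real m" using Xr_bd[of m i j] assms by auto
    finally show "cmod (Xm m $$ (i,j)) \<le> 6 * real m" .
  qed
  thus ?thesis by (simp add: Xm_def)
qed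

lemma rb_one: "rb (1\<^sub>m n) 2"
  using rb_delta[where A = "1\<^sub>m n" and f = "\<lambda>i. i" and g = "\<lambda>i. i" and c = 1] by simp

lemma rb_D2: "rb (D2mat m) (2 * (real m)^2)"
proof (rule rb_delta[where f = "\<lambda>i. i" and g = "\<lambda>i. i"])
  fix i j assume ij: "i < dim_row (D2mat m)" "j < dim_col (D2mat m)"
  have "\<bar>int i - int m div 2\<bar> \<le> int m" using ij by (auto simp: D2mat_def)
  hence "\<bar>real_of_int (int i - int m div 2)\<bar> \<le> real m" by linarith
  hence "\<bar>real_of_int (int i - int m div 2)\<bar>^2 \<le> (real m)^2" by (intro power_mono) auto
  moreover have "cmod (complex_of_nat i - complex_of_int (int m div 2)) = \<bar>real i - real_of_int (int m div 2)\<bar>"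
  proof -
    have "complex_of_nat i - complex_of_int (int m div 2) = complex_of_real (real i - real_of_int (int m div 2))" by simp
    thus ?thesis by (simp only: norm_of_real)
  qed
  ultimately show "cmod (D2mat m $$ (i,j)) \<le> (if j = i then (real m)^2 else 0) + (if j = i then (real m)^2 else 0)"
    using ij by (auto simp: D2mat_def norm_power intro: order_trans[of _ "(real m)^2"])
qed simp

lemma rb_D: "rb (Dmat m) (2 * real m)"
proof (rule rb_delta[where f = "\<lambda>i. i" and g = "\<lambda>i. i"])
  fix i j assume ij: "i < dim_row (Dmat m)" "j < dim_col (Dmat m)"
  have "\<bar>int i - int m div 2\<bar> \<le> int m" using ij by (auto simp: Dmat_def)
  hence "\<bar>real_of_int (int i - int m div 2)\<bar> \<le> real m" by linarith
  moreover have "cmod (complex_of_nat i - complex_of_int (int m div 2)) = \<bar>real i - real_of_int (int m div 2)\<bar>"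
  proof -
    have "complex_of_nat i - complex_of_int (int m div 2) = complex_of_real (real i - real_of_int (int m div 2))" by simp
    thus ?thesis by (simp only: norm_of_real)
  qed
  ultimately show "cmod (Dmat m $$ (i,j)) \<le> (if j = i then real m else 0) + (if j = i then real m else 0)"
    using ij by (auto simp: Dmat_def norm_mult)
qed simp

lemma rb_Q: "rb (Qmat m) (2 * 1)"
  by (rule rb_delta[where f = "\<lambda>i. i + 2" and g = "\<lambda>i. m + 2"]) (auto simp: Qmat_def)

lemma rb_P: "rb (Pmat m) (2 * 1)"
  by (rule rb_delta[where f = "\<lambda>i. 0" and g = "\<lambda>i. i"]) (auto simp: Pmat_def)

lemma rb_C: "rb (colsub m (Mcossin m)) (2 * 1)"
  by (rule rb_delta[where f = "\<lambda>i. i" and g = "\<lambda>i. i - 4"]) (auto simp: colsub_def Mcossin_def)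

lemma rb_Tcs: "rb (Tcossin m) 8"
proof -
  have "rb (Qmat m * colsub m (Mcossin m)) ((2*1) * (2*1))"
    by (rule rb_mult[OF rb_Q rb_C]) (auto simp: Qmat_def colsub_def Mcossin_def)
  hence "rb (Qmat m * colsub m (Mcossin m) * Pmat m) (((2*1) * (2*1)) * (2*1))"
    by (rule rb_mult[OF _ rb_P]) (auto simp: Qmat_def colsub_def Mcossin_def Pmat_def)
  thus ?thesis by (simp add: Tcossin_def)
qed




theorem mainTheorem3:
  shows "\<exists>c::real. c > 0 \<and> (\<forall>n m :: nat. n > 0 \<longrightarrow> m > 0 \<longrightarrow> even n \<longrightarrow> even m \<longrightarrow>
           (\<forall>lam. eigenvalue (Lmat n m) lam \<longrightarrow>
              cmod lam \<le> c * (real n ^ 2 * real m ^ 2 + real m ^ 3)))"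
proof (intro exI[of _ 200] conjI allI impI)
  fix n m :: nat and lam
  assume n: "n > 0" and m: "m > 0" and en: "even n" and em: "even m" and ev: "eigenvalue (Lmat n m) lam"
  have X: "minv (Tsin2 m) = Xm m" by (rule minv_T[OF em m])
  define B where "B = D2mat m + Xm m * Tcossin m * Dmat m"
  have DD: "D2mat m \<in> carrier_mat m m" "Dmat m \<in> carrier_mat m m" by (simp_all add: D2mat_def Dmat_def)
  have Bc: "B \<in> carrier_mat m m" unfolding B_def
    by (rule add_carrier_mat[OF mult_carrier_mat[OF mult_carrier_mat[OF Xm_carrier Tcossin_carrier] DD(2)]])
  have L: "Lmat n m = kron (1\<^sub>m n) B + kron (D2mat n) (Xm m)"
    unfolding Lmat_def X B_def by simp
  have r1: "rb (Xm m * Tcossin m) ((real m * (6 * real m)) * 8)"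
    by (rule rb_mult[OF rb_X[OF m] rb_Tcs]) (use Xm_carrier[of m] Tcossin_carrier[of m] in auto)
  have r2: "rb (Xm m * Tcossin m * Dmat m) (((real m * (6 * real m)) * 8) * (2 * real m))"
    by (rule rb_mult[OF r1 rb_D]) (use Xm_carrier[of m] Tcossin_carrier[of m] in \<open>auto simp: Dmat_def\<close>)
  have rB: "rb B (2 * (real m)^2 + ((real m * (6 * real m)) * 8) * (2 * real m))"
    unfolding B_def
    by (rule rb_add[OF rb_D2 r2]) (use Xm_carrier[of m] Tcossin_carrier[of m] in \<open>auto simp: D2mat_def Dmat_def\<close>)
  have rK1: "rb (kron (1\<^sub>m n) B) (2 * (2 * (real m)^2 + ((real m * (6 * real m)) * 8) * (2 * real m)))"
    by (rule rb_kron[OF rb_one rB]) simp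
  have rK2: "rb (kron (D2mat n) (Xm m)) (2 * (real n)^2 * (real m * (6 * real m)))"
    by (rule rb_kron[OF rb_D2 rb_X[OF m]]) simp
  have rL: "rb (Lmat n m) (2 * (2 * (real m)^2 + ((real m * (6 * real m)) * 8) * (2 * real m))
       + 2 * (real n)^2 * (real m * (6 * real m)))"
    unfolding L by (rule rb_add[OF rK1 rK2]) (use Bc Xm_carrier[of m] in \<open>auto simp: D2mat_def\<close>)
  have sq: "dim_col (Lmat n m) = dim_row (Lmat n m)"
    unfolding L using Bc Xm_carrier[of m] by (simp add: D2mat_def)
  have "cmod lam \<le> 2 * (2 * (real m)^2 + ((real m * (6 * real m)) * 8) * (2 * real m))
       + 2 * (real n)^2 * (real m * (6 * real m))"
    by (rule rb_eig[OF ev sq rL])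
  also have "\<dots> = 4 * real m ^ 2 + 192 * real m ^ 3 + 12 * (real n ^ 2 * real m ^ 2)"
    by (simp add: power2_eq_square power3_eq_cube algebra_simps)
  also have "\<dots> \<le> 200 * (real n ^ 2 * real m ^ 2 + real m ^ 3)"
  proof -
    have "real m ^ 2 \<le> real m ^ 3" using m by (simp add: power_increasing)
    moreover have "0 \<le> real n ^ 2 * real m ^ 2" "0 \<le> real m ^ 3" by simp_all
    moreover have "4*a + 192*b + 12*c \<le> 200*(c+b)" if "a \<le> b" "0 \<le> c" "0 \<le> b" for a b c :: real
    proof -
      have "4*a + 192*b + 12*c \<le> 4*b + 192*b + 12*c" using that(1) by simp
      also have "\<dots> \<le> 200*(c+b)" using that(2,3) by (simp add: algebra_simps)
      finally show ?thesis .
    qed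
    ultimately show ?thesis by blast
  qed
  finally show "cmod lam \<le> 200 * (real n ^ 2 * real m ^ 2 + real m ^ 3)" .
qed simp


end
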